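(* Let $k \geq p \geq 1$ be integers, and let $x_1, \dots, x_k, y_1, \dots, y_k$ be non-negative real numbers such that $\prod_{i \in I} x_i \leq \prod_{i \in I} y_i$ for every subset $I$ of $\{1,\dots,k\}$ with $|I| = p$. Then $\prod_{i=1}^k x_i \leq \prod_{i=1}^k y_i$. *)

theory Defs
  imports Main Complex_Main
begin

end

theory Submission
  imports Defs
begin

lemma prod_leave_one:
  fixes x :: "nat \<Rightarrow> real"
  assumes "finite J" "\<And>i. i \<in> J \<Longrightarrow> x i > 0" "card J = Suc p"
  shows "(\<Prod>j\<in>J. \<Prod>i\<in>J - {j}. x i) = (\<Prod>i\<in>J. x i) ^ p"
proof -
  let ?P = "\<Prod>i\<in>J. x i"
  have Ppos: "?P > 0" using assms by (simp add: prod_pos)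
  have "(\<Prod>j\<in>J. \<Prod>i\<in>J - {j}. x i) = (\<Prod>j\<in>J. ?P / x j)"
    apply (rule prod.cong, simp)
    using assms by (subst prod_diff1) (auto, fastforce)
  also have "\<dots> = ?P ^ card J / ?P" by (simp add: prod_dividef)
  also have "\<dots> = ?P ^ p" using assms(3) Ppos by simp
  finally show ?thesis .
qed

lemma step:
  fixes x y :: "nat \<Rightarrow> real"
  assumes "finite J" "\<And>i. i \<in> J \<Longrightarrow> x i > 0" "\<And>i. i \<in> J \<Longrightarrow> y i > 0"
    "card J = Suc p" "1 \<le> p"
    "\<And>I. I \<subseteq> J \<Longrightarrow> card I = p \<Longrightarrow> (\<Prod>i\<in>I. x i) \<le> (\<Prod>i\<in>I. y i)"
  shows "(\<Prod>i\<in>J. x i) \<le> (\<Prod>i\<in>J. y i)"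
proof -
  have "(\<Prod>i\<in>J. x i) ^ p = (\<Prod>j\<in>J. \<Prod>i\<in>J - {j}. x i)"
    using prod_leave_one[of J x p] assms by simp
  also have "\<dots> \<le> (\<Prod>j\<in>J. \<Prod>i\<in>J - {j}. y i)"
  proof (rule prod_mono, rule conjI)
    fix j assume j: "j \<in> J"
    show "0 \<le> (\<Prod>i\<in>J - {j}. x i)" using assms(2) by (intro prod_nonneg) (auto intro: less_imp_le)
    show "(\<Prod>i\<in>J - {j}. x i) \<le> (\<Prod>i\<in>J - {j}. y i)"
      apply (rule assms(6)) using j assms(1,4) by auto
  qed
  also have "\<dots> = (\<Prod>i\<in>J. y i) ^ p"
    using prod_leave_one[of J y p] assms by simp
  finally have le: "(\<Prod>i\<in>J. x i) ^ p \<le> (\<Prod>i\<in>J. y i) ^ p" .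
  obtain q where q: "p = Suc q" using assms(5) by (cases p) auto
  show ?thesis
    by (rule power_le_imp_le_base[of _ q]) (use le q assms(3) in \<open>auto simp: prod_nonneg less_imp_le\<close>)
qed

theorem lemma5p2:
  fixes k p :: nat and x y :: "nat \<Rightarrow> real"
  assumes "1 \<le> p" and "p \<le> k"
    and "\<And>i. i \<in> {1..k} \<Longrightarrow> x i \<ge> 0"
    and "\<And>i. i \<in> {1..k} \<Longrightarrow> y i \<ge> 0"
    and "\<And>I. I \<subseteq> {1..k} \<Longrightarrow> card I = p \<Longrightarrow> (\<Prod>i\<in>I. x i) \<le> (\<Prod>i\<in>I. y i)"
  shows "(\<Prod>i=1..k. x i) \<le> (\<Prod>i=1..k. y i)"
proof (cases "\<exists>i\<in>{1..k}. x i = 0")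
  case True
  have h1: "(\<Prod>i=1..k. x i) = 0" using True by (simp add: prod_zero_iff)
  have h2: "(\<Prod>i=1..k. y i) \<ge> 0" using assms(4) by (intro prod_nonneg) auto
  show ?thesis using h1 h2 by linarith
next
  case False
  then have xpos: "\<And>i. i \<in> {1..k} \<Longrightarrow> x i > 0" using assms(3) by force
  have ypos: "\<And>i. i \<in> {1..k} \<Longrightarrow> y i > 0"
  proof (rule ccontr)
    fix j assume j: "j \<in> {1..k}" and "\<not> y j > 0"
    then have yj: "y j = 0" using assms(4) by force
    have "p - 1 \<le> card ({1..k} - {j})" using j assms(2) by simp
    then obtain T where T: "T \<subseteq> {1..k} - {j}" "card T = p - 1" "finite T"
      by (rule obtain_subset_with_card_n)
    let ?I = "insert j T"
    have jT: "j \<notin> T" using T by auto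
    have I: "?I \<subseteq> {1..k}" "card ?I = p" using T j assms(1) jT by auto
    have "(\<Prod>i\<in>?I. x i) > 0" using I xpos by (intro prod_pos) auto
    moreover have "(\<Prod>i\<in>?I. y i) = 0" using yj T by simp
    ultimately show False using assms(5)[OF I] by simp
  qed
  have gen: "\<forall>I. I \<subseteq> {1..k} \<longrightarrow> card I = m \<longrightarrow> (\<Prod>i\<in>I. x i) \<le> (\<Prod>i\<in>I. y i)"
    if "p \<le> m" for m
    using that
  proof (induction m rule: dec_induct)
    case base then show ?case using assms(5) by blast
  next
    case (step m)
    show ?case
    proof (intro allI impI)
      fix J assume J: "J \<subseteq> {1..k}" "card J = Suc m"
      have fin: "finite J" using J finite_subset by blast
      show "(\<Prod>i\<in>J. x i) \<le> (\<Prod>i\<in>J. y i)"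
        apply (rule Submission.step[of J x y m])
        using fin J xpos ypos step assms(1) by auto
    qed
  qed
  show ?thesis using gen[OF assms(2)] by auto
qed

end
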